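(* Consider the asynchronous network Newton method described in the context with stepsize $\varepsilon>0$, and let $t\ge2$. Then for every realization and every $y\in\mathbb{R}^n$, $$\big\|D(t-1)^{1/2}y\big\|\le\Big(1+C_1\|g(t-2)\|^{1/2}\Big)\big\|D(t-2)^{1/2}y\big\|,\qquad C_1=\left(\frac{\varepsilon\alpha L\Lambda}{2(1-\Delta)+\alpha m}\right)^{1/2}.$$
   Context: Setup. Let $n\ge 1$ be the number of agents and $\alpha>0$ a scalar. $W\in\mathbb{R}^{n\times n}$ is a symmetric nonnegative matrix with $W\mathbb{1}=\mathbb{1}$ (where $\mathbb{1}$ is the all-ones vector), $\mathrm{null}(I-W)=\mathrm{span}\{\mathbb{1}\}$, $0\le W_{ij}<1$ for all $i,j$, and $\delta\le W_{ii}\le\Delta$ for all $i$, for constants $0<\delta\le\Delta<1$. Each $f_i:\mathbb{R}\to\mathbb{R}$ is twice continuously differentiable with $0<m\le f_i''(s)\le M<\infty$ for all $s$ and $|f_i''(a)-f_i''(b)|\le L|a-b|$ for all $a,b$. Define $F(x)=\frac12 x^T(I-W)x+\alpha\sum_{i=1}^n f_i(x_i)$ for $x\in\mathbb{R}^n$, with minimum value $F^*$ and minimizer $x^*$. Let $g(x)=\nabla F(x)$, $G(x)=\mathrm{diag}(f_1''(x_1),\dots,f_n''(x_n))$, $H(x)=\nabla^2F(x)=I-W+\alpha G(x)$. Let $W_d$ be the diagonal matrix with $[W_d]_{ii}=W_{ii}$, and set $D(x)=\alpha G(x)+2(I-W_d)$ (diagonal, positive definite) and $B=I-2W_d+W$,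 so $H(x)=D(x)-B$. Define the approximate Hessian inverse $\hat H(x)^{-1}=D(x)^{-1/2}\big(I+D(x)^{-1/2}BD(x)^{-1/2}\big)D(x)^{-1/2}$. Constants: $\rho=\frac{2(1-\delta)}{2(1-\delta)+\alpha m}$, $\Lambda=\frac{1+\rho}{2(1-\Delta)+\alpha m}$, $\lambda=\frac{1}{2(1-\delta)+\alpha M}$. Algorithm (asynchronous network Newton). Given $x(0)\in\mathbb{R}^n$ and stepsize $\varepsilon>0$, let $\Phi(1),\Phi(2),\dots$ be i.i.d. random diagonal $n\times n$ matrices, each equal to $e_ie_i^T$ (the matrix with a single $1$ in position $(i,i)$ and zeros elsewhere) with probability $1/n$ for each $i=1,\dots,n$ (i.e., one uniformly random agent is active per iteration). The iterates are $x(t)=x(t-1)-\varepsilon\,\Phi(t)\hat H(x(t-1))^{-1}g(x(t-1))$, $t\ge1$. Write $g(t)=g(x(t))$, $D(t)=D(x(t))$, $H(t)=H(x(t))$, $\hat H(t)^{-1}=\hat H(x(t))^{-1}$. $\mathcal{F}_t$ denotes the $\sigma$-field generated by $\Phi(1),\dots,\Phi(t)$ (so $x(t)$ is $\mathcal{F}_t$-measurable). *)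

theory Defs
  imports "HOL-Analysis.Analysis"
begin

definition diag_mat :: "real ^ 'n \<Rightarrow> real ^ 'n ^ 'n" where
  "diag_mat v = (\<chi> i j. if i = j then v $ i else 0)"

(* g(x) = grad F(x) = (I - W) x + alpha (f_i'(x_i))_i ; f1 i is f_i' *)
definition gradF :: "real ^ 'n ^ 'n \<Rightarrow> real \<Rightarrow> ('n \<Rightarrow> real \<Rightarrow> real) \<Rightarrow> real ^ 'n \<Rightarrow> real ^ 'n" where
  "gradF W alpha f1 x = (mat 1 - W) *v x + alpha *\<^sub>R (\<chi> i. f1 i (x $ i))"

(* diagonal of D(x) = alpha G(x) + 2 (I - W_d); f2 i is f_i'' *)
definition Dvec :: "real ^ 'n ^ 'n \<Rightarrow> real \<Rightarrow> ('n \<Rightarrow> real \<Rightarrow> real) \<Rightarrow> real ^ 'n \<Rightarrow> real ^ 'n" where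
  "Dvec W alpha f2 x = (\<chi> i. alpha * f2 i (x $ i) + 2 * (1 - W $ i $ i))"

definition Dmat :: "real ^ 'n ^ 'n \<Rightarrow> real \<Rightarrow> ('n \<Rightarrow> real \<Rightarrow> real) \<Rightarrow> real ^ 'n \<Rightarrow> real ^ 'n ^ 'n" where
  "Dmat W alpha f2 x = diag_mat (Dvec W alpha f2 x)"

definition Dsqrt :: "real ^ 'n ^ 'n \<Rightarrow> real \<Rightarrow> ('n \<Rightarrow> real \<Rightarrow> real) \<Rightarrow> real ^ 'n \<Rightarrow> real ^ 'n ^ 'n" where
  "Dsqrt W alpha f2 x = diag_mat (\<chi> i. sqrt (Dvec W alpha f2 x $ i))"

definition Dsqrt_inv :: "real ^ 'n ^ 'n \<Rightarrow> real \<Rightarrow> ('n \<Rightarrow> real \<Rightarrow> real) \<Rightarrow> real ^ 'n \<Rightarrow> real ^ 'n ^ 'n" where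
  "Dsqrt_inv W alpha f2 x = diag_mat (\<chi> i. 1 / sqrt (Dvec W alpha f2 x $ i))"

definition Wdiag :: "real ^ 'n ^ 'n \<Rightarrow> real ^ 'n ^ 'n" where
  "Wdiag W = diag_mat (\<chi> i. W $ i $ i)"

definition Bmat :: "real ^ 'n ^ 'n \<Rightarrow> real ^ 'n ^ 'n" where
  "Bmat W = mat 1 - 2 *\<^sub>R Wdiag W + W"

definition Hhat_inv :: "real ^ 'n ^ 'n \<Rightarrow> real \<Rightarrow> ('n \<Rightarrow> real \<Rightarrow> real) \<Rightarrow> real ^ 'n \<Rightarrow> real ^ 'n ^ 'n" where
  "Hhat_inv W alpha f2 x =
     Dsqrt_inv W alpha f2 x **
     (mat 1 + Dsqrt_inv W alpha f2 x ** Bmat W ** Dsqrt_inv W alpha f2 x) **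
     Dsqrt_inv W alpha f2 x"

definition Phi :: "'n \<Rightarrow> real ^ 'n ^ 'n" where
  "Phi i = diag_mat (\<chi> j. if j = i then 1 else 0)"

(* iterates of the asynchronous network Newton method along a realization:
   sel t is the agent active at iteration t (t >= 1), i.e. Phi(t) = e_{sel t} e_{sel t}^T *)
primrec ann_iter :: "real ^ 'n ^ 'n \<Rightarrow> real \<Rightarrow> ('n \<Rightarrow> real \<Rightarrow> real) \<Rightarrow> ('n \<Rightarrow> real \<Rightarrow> real)
    \<Rightarrow> real \<Rightarrow> real ^ 'n \<Rightarrow> (nat \<Rightarrow> 'n) \<Rightarrow> nat \<Rightarrow> real ^ 'n" where
  "ann_iter W alpha f1 f2 eps x0 sel 0 = x0"
| "ann_iter W alpha f1 f2 eps x0 sel (Suc t) =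
     ann_iter W alpha f1 f2 eps x0 sel t
     - eps *\<^sub>R (Phi (sel (Suc t)) *v
         (Hhat_inv W alpha f2 (ann_iter W alpha f1 f2 eps x0 sel t) *v
           gradF W alpha f1 (ann_iter W alpha f1 f2 eps x0 sel t)))"

end

theory Submission
  imports Defs
begin

lemma diag_mult: "diag_mat v *v y = (\<chi> i. v$i * (y$i::real))"
proof -
  have "\<And>i. (\<Sum>j\<in>UNIV. (if i = j then v$i else 0) * y$j) = v$i * y$i"
  proof -
    fix i
    have "(\<Sum>j\<in>UNIV. (if i = j then v$i else 0) * y$j) = (\<Sum>j\<in>UNIV. if i = j then v$j*y$j else 0)"
      by (rule sum.cong) auto
    then show "(\<Sum>j\<in>UNIV. (if i = j then v$i else 0) * y$j) = v$i * y$i" by simp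
  qed
  then show ?thesis by (simp add: vec_eq_iff diag_mat_def matrix_vector_mult_def)
qed

lemma Hhat_comp:
  fixes W :: "real^'n^'n"
  assumes pos: "\<And>j. Dvec W alpha f2 x $ j > 0"
  shows "(Hhat_inv W alpha f2 x *v g) $ k =
    g$k / Dvec W alpha f2 x $ k + (\<Sum>j\<in>UNIV. Bmat W $ k $ j * (g$j / Dvec W alpha f2 x $ j)) / Dvec W alpha f2 x $ k"
proof -
  let ?S = "Dsqrt_inv W alpha f2 x"
  let ?D = "\<lambda>j. Dvec W alpha f2 x $ j"
  have e: "Hhat_inv W alpha f2 x *v g = ?S *v (?S *v g + ?S *v (Bmat W *v (?S *v (?S *v g))))"
    unfolding Hhat_inv_def
    by (simp add: matrix_vector_mul_assoc[symmetric] matrix_vector_mult_add_rdistrib)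
  have sq: "\<And>j. 1 / sqrt (?D j) * (1 / sqrt (?D j)) = 1 / ?D j"
    using pos by (simp add: less_imp_le)
  have sq2: "\<And>j z. 1 / sqrt (?D j) * (1 / sqrt (?D j) * z) = z / ?D j"
    using sq by (metis mult.assoc times_divide_eq_left mult_1)
  have a: "(?S *v (?S *v g)) = (\<chi> j. g$j / ?D j)"
    unfolding Dsqrt_inv_def diag_mult using sq2 by (simp add: vec_eq_iff)
  have bq: "(Bmat W *v (\<chi> j. g$j / ?D j)) $ k = (\<Sum>j\<in>UNIV. Bmat W $ k $ j * (g$j / ?D j))"
    by (simp add: matrix_vector_mult_def)
  have "(Hhat_inv W alpha f2 x *v g) $ k
     = 1 / sqrt (?D k) * (1 / sqrt (?D k) * g $ k + 1 / sqrt (?D k) * (Bmat W *v (\<chi> j. g$j / ?D j)) $ k)"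
    unfolding e a unfolding Dsqrt_inv_def diag_mult by simp
  also have "\<dots> = 1 / sqrt (?D k) * (1 / sqrt (?D k) * g $ k) + 1 / sqrt (?D k) * (1 / sqrt (?D k) * (Bmat W *v (\<chi> j. g$j / ?D j)) $ k)"
    by (rule distrib_left)
  also have "\<dots> = g$k / ?D k + (\<Sum>j\<in>UNIV. Bmat W $ k $ j * (g$j / ?D j)) / ?D k"
    unfolding sq2 bq ..
  finally show ?thesis .
qed

lemma normD2:
  fixes W :: "real^'n^'n"
  assumes "\<And>j. Dvec W alpha f2 x $ j \<ge> 0"
  shows "(norm (Dsqrt W alpha f2 x *v y))^2 = (\<Sum>i\<in>UNIV. Dvec W alpha f2 x $ i * (y$i)^2)"
  unfolding power2_norm_eq_inner Dsqrt_def diag_mult inner_vec_def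
  using assms by (simp add: power2_eq_square[symmetric] power_mult_distrib)

lemma Bmat_entry: "Bmat W $ k $ j = (if k = j then 1 - W$k$k else (W $ k $ j :: real))"
  by (simp add: Bmat_def Wdiag_def diag_mat_def mat_def)

lemma Bmat_sum:
  fixes W :: "real^'n^'n"
  assumes "W *v vec 1 = vec 1"
  shows "(\<Sum>j\<in>UNIV. Bmat W $ k $ j) = 2 * (1 - W$k$k)"
proof -
  have w1: "(\<Sum>j\<in>UNIV. W$k$j) = 1"
    using arg_cong[OF assms, of "\<lambda>v. v $ k"] by (simp add: matrix_vector_mult_def)
  have "(\<Sum>j\<in>UNIV. Bmat W $ k $ j) = (\<Sum>j\<in>UNIV. W$k$j + (if k = j then 1 - 2 * W$k$k else 0))"
    by (rule sum.cong) (auto simp: Bmat_entry)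
  also have "\<dots> = 1 + (1 - 2 * W$k$k)" by (simp add: sum.distrib w1)
  finally show ?thesis by simp
qed

lemma key_bound:
  fixes D B g :: "'n::finite \<Rightarrow> real"
  assumes c: "0 < c" and Dc: "\<And>j. c \<le> D j" and Bn: "\<And>j. 0 \<le> B j"
    and Bs: "(\<Sum>j\<in>UNIV. B j) = 2 * w" and Dk: "2 * w + a \<le> D k"
    and a: "0 < a" and w: "0 \<le> w" "w \<le> w'" and cw: "c \<le> 2 * w + a"
    and G: "\<And>j. \<bar>g j\<bar> \<le> G"
  shows "\<bar>g k / D k + (\<Sum>j\<in>UNIV. B j * (g j / D j)) / D k\<bar> \<le> (1 + 2 * w' / (2 * w' + a)) / c * G"
proof -
  have G0: "0 \<le> G" using G[of k] by linarith
  have Dpos: "\<And>j. 0 < D j" using c Dc less_le_trans by blast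
  have "\<bar>\<Sum>j\<in>UNIV. B j * (g j / D j)\<bar> \<le> (\<Sum>j\<in>UNIV. \<bar>B j * (g j / D j)\<bar>)" by (rule sum_abs)
  also have "\<dots> \<le> (\<Sum>j\<in>UNIV. B j * (G / c))"
  proof (rule sum_mono)
    fix j
    have "\<bar>g j\<bar> / D j \<le> G / D j"
      by (rule divide_right_mono[OF G[of j]]) (use Dpos[of j] in linarith)
    also have "\<dots> \<le> G / c"
      by (rule divide_left_mono[OF Dc[of j] G0]) (rule mult_pos_pos[OF Dpos[of j] c])
    finally have "\<bar>g j / D j\<bar> \<le> G / c" unfolding abs_divide abs_of_pos[OF Dpos[of j]] .
    then show "\<bar>B j * (g j / D j)\<bar> \<le> B j * (G / c)"
      unfolding abs_mult abs_of_nonneg[OF Bn[of j]] by (rule mult_left_mono[OF _ Bn[of j]])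
  qed
  also have "\<dots> = (\<Sum>j\<in>UNIV. B j) * (G / c)" by (rule sum_distrib_right[symmetric])
  also have "\<dots> = 2 * w * (G / c)" by (simp only: Bs)
  finally have S: "\<bar>\<Sum>j\<in>UNIV. B j * (g j / D j)\<bar> \<le> 2 * w * (G / c)" .
  have "\<bar>g k / D k + (\<Sum>j\<in>UNIV. B j * (g j / D j)) / D k\<bar>
      = \<bar>g k + (\<Sum>j\<in>UNIV. B j * (g j / D j))\<bar> / D k"
    by (simp only: add_divide_distrib[symmetric] abs_divide abs_of_pos[OF Dpos[of k]])
  also have "\<dots> \<le> (G + 2 * w * (G / c)) / D k"
  proof (rule divide_right_mono)
    show "\<bar>g k + (\<Sum>j\<in>UNIV. B j * (g j / D j))\<bar> \<le> G + 2 * w * (G / c)"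
      using abs_triangle_ineq[of "g k" "\<Sum>j\<in>UNIV. B j * (g j / D j)"] add_mono[OF G[of k] S] by (rule order_trans)
    show "0 \<le> D k" using Dpos[of k] by linarith
  qed
  also have "\<dots> \<le> (G + 2 * w * (G / c)) / (2 * w + a)"
  proof (rule divide_left_mono)
    have "0 \<le> G / c" using G0 c by simp
    then have "0 \<le> 2 * w * (G / c)" using w by (intro mult_nonneg_nonneg) auto
    then show "0 \<le> G + 2 * w * (G / c)" using G0 by linarith
    show "2 * w + a \<le> D k" by (rule Dk)
    show "0 < D k * (2 * w + a)" using Dpos[of k] a w by simp
  qed
  also have "\<dots> = G / c * ((c + 2 * w) / (2 * w + a))"
    using c by (simp add: field_simps)
  also have "\<dots> \<le> G / c * ((4 * w + a) / (2 * w + a))"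
  proof (rule mult_left_mono)
    show "(c + 2 * w) / (2 * w + a) \<le> (4 * w + a) / (2 * w + a)"
      by (rule divide_right_mono) (use cw a w in linarith)+
    show "0 \<le> G / c" using G0 c by simp
  qed
  also have "\<dots> \<le> G / c * ((4 * w' + a) / (2 * w' + a))"
  proof (intro mult_left_mono)
    show "(4 * w + a) / (2 * w + a) \<le> (4 * w' + a) / (2 * w' + a)"
    proof -
      have e1: "(4 * w + a) / (2 * w + a) = 2 - a / (2 * w + a)" using a w by (simp add: field_simps)
      have e2: "(4 * w' + a) / (2 * w' + a) = 2 - a / (2 * w' + a)" using a w by (simp add: field_simps)
      have "a / (2 * w' + a) \<le> a / (2 * w + a)" using a w by (intro divide_left_mono) auto
      then show ?thesis unfolding e1 e2 by linarith
    qed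
  qed (use G0 c in auto)
  also have "\<dots> = (1 + 2 * w' / (2 * w' + a)) / c * G"
    using a w by (simp add: field_simps)
  finally show ?thesis .
qed

theorem mainTheorem6:
  fixes W :: "real ^ 'n ^ 'n"
    and alpha eps m M L \<delta> \<Delta> :: real
    and f f1 f2 :: "'n \<Rightarrow> real \<Rightarrow> real"
    and x0 :: "real ^ 'n"
    and sel :: "nat \<Rightarrow> 'n"
    and t :: nat
  assumes alpha_pos: "alpha > 0"
    and W_sym: "transpose W = W"
    and W_nonneg: "\<forall>i j. 0 \<le> W $ i $ j"
    and W_lt1: "\<forall>i j. W $ i $ j < 1"
    and W_stoch: "W *v vec 1 = vec 1"
    and W_null: "{v. (mat 1 - W) *v v = 0} = span {vec 1}"
    and delta_pos: "0 < \<delta>" and delta_le: "\<delta> \<le> \<Delta>" and Delta_lt1: "\<Delta> < 1"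
    and W_diag: "\<forall>i. \<delta> \<le> W $ i $ i \<and> W $ i $ i \<le> \<Delta>"
    and f_deriv: "\<forall>i s. (f i has_real_derivative f1 i s) (at s)"
    and f1_deriv: "\<forall>i s. (f1 i has_real_derivative f2 i s) (at s)"
    and f2_cont: "\<forall>i. continuous_on UNIV (f2 i)"
    and m_pos: "0 < m"
    and f2_bounds: "\<forall>i s. m \<le> f2 i s \<and> f2 i s \<le> M"
    and f2_lip: "\<forall>i a b. \<bar>f2 i a - f2 i b\<bar> \<le> L * \<bar>a - b\<bar>"
    and eps_pos: "eps > 0"
    and t_ge: "t \<ge> 2"
  shows "let \<rho> = 2 * (1 - \<delta>) / (2 * (1 - \<delta>) + alpha * m);
             \<Lambda> = (1 + \<rho>) / (2 * (1 - \<Delta>) + alpha * m);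
             C1 = sqrt (eps * alpha * L * \<Lambda> / (2 * (1 - \<Delta>) + alpha * m));
             x = ann_iter W alpha f1 f2 eps x0 sel
         in \<forall>y :: real ^ 'n.
              norm (Dsqrt W alpha f2 (x (t - 1)) *v y)
              \<le> (1 + C1 * sqrt (norm (gradF W alpha f1 (x (t - 2)))))
                 * norm (Dsqrt W alpha f2 (x (t - 2)) *v y)"
  proof -
  define \<rho> where "\<rho> = 2 * (1 - \<delta>) / (2 * (1 - \<delta>) + alpha * m)"
  define \<Lambda> where "\<Lambda> = (1 + \<rho>) / (2 * (1 - \<Delta>) + alpha * m)"
  define c where "c = 2 * (1 - \<Delta>) + alpha * m"
  define C1 where "C1 = sqrt (eps * alpha * L * \<Lambda> / c)"
  define x where "x = ann_iter W alpha f1 f2 eps x0 sel"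
  define s where "s = t - 2"
  have ts: "t - 1 = Suc s" "t - 2 = s" using t_ge by (auto simp: s_def)
  define xa where "xa = x s"
  define xb where "xb = x (Suc s)"
  define k where "k = sel (Suc s)"
  define g where "g = gradF W alpha f1 xa"
  define G where "G = norm g"
  define h where "h = Hhat_inv W alpha f2 xa *v g"
  have xb_eq: "xb = xa - eps *\<^sub>R (Phi k *v h)"
    by (simp add: xb_def xa_def x_def k_def h_def g_def)
  have am: "0 < alpha * m" using alpha_pos m_pos by simp
  have c_pos: "0 < c" using Delta_lt1 am by (simp add: c_def)
  have Dge: "\<And>z j. c \<le> Dvec W alpha f2 z $ j"
  proof -
    fix z j
    have "alpha * m \<le> alpha * f2 j (z $ j)" using f2_bounds alpha_pos by simp
    moreover have "W $ j $ j \<le> \<Delta>" using W_diag by blast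
    ultimately show "c \<le> Dvec W alpha f2 z $ j" by (simp add: c_def Dvec_def)
  qed
  have Dpos: "\<And>z j. 0 < Dvec W alpha f2 z $ j" using Dge c_pos less_le_trans by blast
  have L0: "0 \<le> L"
  proof -
    have "\<bar>f2 undefined 1 - f2 undefined 0\<bar> \<le> L * \<bar>1 - 0\<bar>" using f2_lip by blast
    then show ?thesis by simp
  qed
  have rho0: "0 \<le> \<rho>" using delta_le Delta_lt1 am by (simp add: \<rho>_def)
  have Lam_c: "\<Lambda> = (1 + \<rho>) / c" by (simp add: \<Lambda>_def c_def)
  have Lam0: "0 \<le> \<Lambda>" using rho0 c_pos unfolding Lam_c by simp
  have G0: "0 \<le> G" by (simp add: G_def)
  have hb: "\<And>i. \<bar>h $ i\<bar> \<le> \<Lambda> * G"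
  proof -
    fix i
    have "\<bar>h $ i\<bar> \<le> (1 + 2 * (1 - \<delta>) / (2 * (1 - \<delta>) + alpha * m)) / c * G"
      unfolding h_def Hhat_comp[OF Dpos]
    proof (rule key_bound[where w = "1 - W$i$i" and a = "alpha * m"])
      show "0 < c" by (rule c_pos)
      show "\<And>j. c \<le> Dvec W alpha f2 xa $ j" by (rule Dge)
      show "\<And>j. 0 \<le> Bmat W $ i $ j" using W_nonneg W_lt1 by (simp add: Bmat_entry less_imp_le)
      show "(\<Sum>j\<in>UNIV. Bmat W $ i $ j) = 2 * (1 - W $ i $ i)" by (rule Bmat_sum[OF W_stoch])
      have "alpha * m \<le> alpha * f2 i (xa $ i)" using f2_bounds alpha_pos by simp
      then show "2 * (1 - W $ i $ i) + alpha * m \<le> Dvec W alpha f2 xa $ i" by (simp add: Dvec_def)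
      show "0 < alpha * m" by (rule am)
      have wi: "\<delta> \<le> W $ i $ i" "W $ i $ i \<le> \<Delta>" using W_diag by blast+
      show "0 \<le> 1 - W $ i $ i" "1 - W $ i $ i \<le> 1 - \<delta>" using wi Delta_lt1 by linarith+
      show "c \<le> 2 * (1 - W $ i $ i) + alpha * m" using wi by (simp add: c_def)
      show "\<And>j. \<bar>g $ j\<bar> \<le> G" by (simp add: G_def component_le_norm_cart)
    qed
    then show "\<bar>h $ i\<bar> \<le> \<Lambda> * G" by (simp add: \<Lambda>_def \<rho>_def c_def)
  qed
  have xd: "\<And>i. \<bar>xb $ i - xa $ i\<bar> \<le> eps * (\<Lambda> * G)"
  proof -
    fix i
    have "\<bar>xb $ i - xa $ i\<bar> = eps * \<bar>(if i = k then h $ i else 0)\<bar>"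
      using eps_pos by (simp add: xb_eq Phi_def diag_mult abs_mult)
    also have "\<dots> \<le> eps * (\<Lambda> * G)" using eps_pos hb[of i] Lam0 G0
      by (intro mult_left_mono) auto
    finally show "\<bar>xb $ i - xa $ i\<bar> \<le> eps * (\<Lambda> * G)" .
  qed
  define K where "K = 1 + C1 * sqrt G"
  have C1sq: "C1^2 = eps * alpha * L * \<Lambda> / c"
    unfolding C1_def using eps_pos alpha_pos L0 Lam0 c_pos by simp
  have C1n: "0 \<le> C1" unfolding C1_def using eps_pos alpha_pos L0 Lam0 c_pos by simp
  have sG: "0 \<le> sqrt G" using G0 by simp
  have CsG: "0 \<le> C1 * sqrt G" using C1n sG by simp
  have K0: "0 \<le> K" using CsG by (simp add: K_def)
  have Kb: "1 + C1^2 * G \<le> K^2"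
  proof -
    note CsG
    moreover have "(C1 * sqrt G)^2 = C1^2 * G" using G0 by (simp add: power_mult_distrib)
    ultimately show ?thesis unfolding K_def by (simp add: power2_sum)
  qed
  have Db: "\<And>i. Dvec W alpha f2 xb $ i \<le> K^2 * Dvec W alpha f2 xa $ i"
  proof -
    fix i
    let ?Da = "Dvec W alpha f2 xa $ i"
    have "Dvec W alpha f2 xb $ i - ?Da = alpha * (f2 i (xb $ i) - f2 i (xa $ i))"
      by (simp add: Dvec_def algebra_simps)
    also have "\<dots> \<le> alpha * (L * \<bar>xb $ i - xa $ i\<bar>)"
      using f2_lip alpha_pos by (intro mult_left_mono) (auto simp: abs_le_iff)
    also have "\<dots> \<le> alpha * (L * (eps * (\<Lambda> * G)))"
      using alpha_pos L0 xd[of i] by (intro mult_left_mono) auto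
    also have "\<dots> = c * (C1^2 * G)" unfolding C1sq using c_pos by simp
    also have "\<dots> \<le> ?Da * (C1^2 * G)"
      using Dge[of xa i] G0 by (intro mult_right_mono) auto
    finally have "Dvec W alpha f2 xb $ i \<le> ?Da * (1 + C1^2 * G)" by (simp add: algebra_simps)
    also have "\<dots> \<le> ?Da * K^2" using Kb Dpos[of xa i] by (intro mult_left_mono) auto
    finally show "Dvec W alpha f2 xb $ i \<le> K^2 * ?Da" by (simp add: mult.commute)
  qed
  have main: "norm (Dsqrt W alpha f2 xb *v y) \<le> K * norm (Dsqrt W alpha f2 xa *v y)" for y
  proof (rule power2_le_imp_le)
    show "0 \<le> K * norm (Dsqrt W alpha f2 xa *v y)" using K0 by simp
    have "(norm (Dsqrt W alpha f2 xb *v y))^2 = (\<Sum>i\<in>UNIV. Dvec W alpha f2 xb $ i * (y$i)^2)"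
      using Dpos by (intro normD2) (simp add: less_imp_le)
    also have "\<dots> \<le> (\<Sum>i\<in>UNIV. K^2 * (Dvec W alpha f2 xa $ i * (y$i)^2))"
      using Db by (intro sum_mono) (simp add: mult.assoc[symmetric] mult_right_mono)
    also have "\<dots> = K^2 * (norm (Dsqrt W alpha f2 xa *v y))^2"
      using Dpos by (subst normD2) (auto simp: less_imp_le sum_distrib_left)
    also have "\<dots> = (K * norm (Dsqrt W alpha f2 xa *v y))^2" by (simp add: power_mult_distrib)
    finally show "(norm (Dsqrt W alpha f2 xb *v y))^2 \<le> (K * norm (Dsqrt W alpha f2 xa *v y))^2" .
  qed
  show ?thesis
    unfolding Let_def ts \<rho>_def[symmetric] \<Lambda>_def[symmetric] c_def[symmetric] C1_def[symmetric]
      x_def[symmetric] xa_def[symmetric] xb_def[symmetric] g_def[symmetric] G_def[symmetric] K_def[symmetric]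
    using main by (simp add: K_def C1_def Lam_c)
qed

end
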